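(* Let $a\ge2$ be an integer. For $n\ge0$ let $F(n,t)=\dfrac{n!^a}{\Gamma^{a-1}(t+1)\Gamma^a(n-t+1)}$ and, for integers $0\le\mu\le a-1$, $F_{n,\mu}:=\sum_{k=0}^n\bigl(\frac{d}{dt}\bigr)^\mu F(n,t)\big|_{t=k}$. Let $q_n=\sum_{k=0}^n\binom nk^a k!$, $p_{n,\mu}=\sum_{k=0}^n\binom nk^a k!\,Y_\mu(r_1(k),\ldots,r_\mu(k))$ with $r_m(k)=(m-1)!\bigl(aH_{n-k}^{(m)}+(-1)^m(a-1)H_k^{(m)}\bigr)$, and $\alpha_\mu=Y_\mu(x_1,\ldots,x_\mu)$ with $x_1=\gamma$, $x_m=(m-1)!(a+(-1)^m(a-1))\zeta(m)$ for $m\ge2$. Then for each $\mu=1,\ldots,a-1$ there exist $\mu$ constants $\lambda_{\mu,\nu}$, $\nu=1,\ldots,\mu$, independent of $n$, such that for all $n=0,1,2,\ldots$ $$p_{n,\mu}-q_n\alpha_\mu=\sum_{\nu=1}^\mu\lambda_{\mu,\nu}F_{n,\nu};$$ moreover $F_{n,0}=q_n$ and $D_n^\mu\,p_{n,\mu}\in\mathbb{Z}$.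
   Context: $\gamma$ is Euler's constant, $\zeta$ the Riemann zeta function, $H_n^{(m)}=\sum_{j=1}^n j^{-m}$ ($H_0^{(m)}=0$), $D_n=\operatorname{lcm}(1,\ldots,n)$. $Y_n$ is the complete exponential Bell polynomial: $\exp\bigl(\sum_{m\ge1}x_m t^m/m!\bigr)=\sum_{n\ge0}Y_n(x_1,\ldots,x_n)t^n/n!$. *)

theory Defs
  imports "HOL-Analysis.Analysis" "HOL-Computational_Algebra.Formal_Power_Series"
begin

definition harmgen :: "nat \<Rightarrow> nat \<Rightarrow> real" where
  "harmgen m n = (\<Sum>j=1..n. 1 / (real j) ^ m)"

text \<open>Riemann zeta at integer m (used only for m >= 2).\<close>
definition zeta_nat :: "nat \<Rightarrow> real" where
  "zeta_nat m = (\<Sum>k. 1 / (real (Suc k)) ^ m)"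

text \<open>Complete exponential Bell polynomial via its generating function:
  exp(sum_{m>=1} x_m t^m/m!) = sum_n Y_n t^n/n!.\<close>
definition bellY :: "nat \<Rightarrow> (nat \<Rightarrow> real) \<Rightarrow> real" where
  "bellY n x = fact n *
     fps_nth (fps_exp 1 oo Abs_fps (\<lambda>m. if m = 0 then 0 else x m / fact m)) n"

text \<open>F(n,t) = n!^a / (Gamma(t+1)^(a-1) Gamma(n-t+1)^a), written with the
  reciprocal Gamma function so that it is the entire function.\<close>
definition Ffun :: "nat \<Rightarrow> nat \<Rightarrow> real \<Rightarrow> real" where
  "Ffun a n t = (fact n) ^ a * rGamma (t + 1) ^ (a - 1) * rGamma (real n - t + 1) ^ a"

definition Fsum :: "nat \<Rightarrow> nat \<Rightarrow> nat \<Rightarrow> real" where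
  "Fsum a n \<mu> = (\<Sum>k=0..n. (deriv ^^ \<mu>) (Ffun a n) (real k))"

definition qseq :: "nat \<Rightarrow> nat \<Rightarrow> real" where
  "qseq a n = (\<Sum>k=0..n. real (n choose k) ^ a * fact k)"

definition rterm :: "nat \<Rightarrow> nat \<Rightarrow> nat \<Rightarrow> nat \<Rightarrow> real" where
  "rterm a n k m = fact (m - 1) *
     (real a * harmgen m (n - k) + (-1) ^ m * (real a - 1) * harmgen m k)"

definition pseq :: "nat \<Rightarrow> nat \<Rightarrow> nat \<Rightarrow> real" where
  "pseq a n \<mu> = (\<Sum>k=0..n. real (n choose k) ^ a * fact k * bellY \<mu> (rterm a n k))"

definition xconst :: "nat \<Rightarrow> nat \<Rightarrow> real" where
  "xconst a m = (if m = 1 then euler_mascheroni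
                 else fact (m - 1) * (real a + (-1) ^ m * (real a - 1)) * zeta_nat m)"

definition alpha :: "nat \<Rightarrow> nat \<Rightarrow> real" where
  "alpha a \<mu> = bellY \<mu> (xconst a)"

end

theory Submission imports Defs "HOL-Complex_Analysis.Complex_Analysis" begin

fun bellR :: "nat \<Rightarrow> (nat \<Rightarrow> 'a::comm_ring_1) \<Rightarrow> 'a" where
  "bellR 0 x = 1"
| "bellR (Suc n) x = (\<Sum>i=0..n. of_nat (n choose i) * bellR i x * x (Suc n - i))"

lemma bellR_cong: "(\<And>m. m \<ge> 1 \<Longrightarrow> x m = y m) \<Longrightarrow> bellR n x = bellR n y"
proof (induction n rule: less_induct)
  case (less n)
  then show ?case by (cases n) (auto intro!: sum.cong)
qed

lemma bellR_of_real: "bellR n (\<lambda>m. of_real (x m) :: 'a::{real_algebra_1,comm_ring_1}) = of_real (bellR n x)"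
proof (induction n rule: less_induct)
  case (less n)
  then show ?case by (cases n) (auto intro!: sum.cong)
qed

lemma higher_deriv_real_transfer:
  fixes G :: "complex \<Rightarrow> complex" and f :: "real \<Rightarrow> real"
  assumes hol: "G holomorphic_on UNIV" and eq: "\<And>x. G (of_real x) = of_real (f x)"
  shows "(deriv^^k) G (of_real x) = of_real ((deriv^^k) f x)"
proof (induction k arbitrary: x)
  case 0
  then show ?case using eq by simp
next
  case (Suc k)
  define H where "H = (deriv^^k) G"
  define g where "g = (deriv^^k) f"
  have Hh: "H holomorphic_on UNIV" unfolding H_def by (rule holomorphic_higher_deriv[OF hol]) auto
  have IH: "\<And>x. H (of_real x) = of_real (g x)" using Suc unfolding H_def g_def by simp
  have dH: "(H has_field_derivative deriv H z) (at z)" for z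
    using Hh by (meson DERIV_deriv_iff_field_differentiable UNIV_I holomorphic_on_imp_differentiable_at open_UNIV)
  have v: "((\<lambda>t. of_real (g t) :: complex) has_vector_derivative deriv H (of_real x)) (at x)"
    using has_vector_derivative_real_field[OF dH[of "of_real x"], where s=UNIV] IH by simp
  have dRe: "(g has_real_derivative Re (deriv H (of_real x))) (at x)"
    using has_field_derivative_Re[OF v] by simp
  have dIm: "((\<lambda>t. 0) has_real_derivative Im (deriv H (of_real x))) (at x)"
    using has_field_derivative_Im[OF v] by simp
  have "Im (deriv H (of_real x)) = 0"
    using DERIV_unique[OF dIm DERIV_const] .
  moreover have "deriv g x = Re (deriv H (of_real x))" using dRe by (rule DERIV_imp_deriv)
  ultimately have "deriv H (of_real x) = of_real (deriv g x)" by (simp add: complex_eq_iff)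
  then show ?case unfolding H_def g_def by simp
qed


definition Axf :: "(nat \<Rightarrow> real) \<Rightarrow> real fps" where
  "Axf x = Abs_fps (\<lambda>m. if m = 0 then 0 else x m / fact m)"
definition ES :: "(nat \<Rightarrow> real) \<Rightarrow> real fps" where
  "ES x = fps_exp 1 oo Axf x"

lemma bellY_ES: "bellY n x = fact n * ES x $ n"
  unfolding bellY_def ES_def Axf_def ..

lemma ES_0: "ES x $ 0 = 1" unfolding ES_def by simp

lemma ES_deriv: "fps_deriv (ES x) = fps_deriv (Axf x) * ES x"
proof -
  have "fps_deriv (ES x) = (fps_deriv (fps_exp 1) oo Axf x) * fps_deriv (Axf x)"
    unfolding ES_def by (rule fps_compose_deriv) (simp add: Axf_def)
  also have "fps_deriv (fps_exp (1::real)) = fps_exp 1" by simp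
  finally show ?thesis unfolding ES_def by (simp add: mult.commute)
qed

lemma bellY_bellR: "bellY n x = bellR n x"
proof (induction n rule: less_induct)
  case (less n)
  show ?case
  proof (cases n)
    case 0 then show ?thesis by (simp add: bellY_ES ES_0)
  next
    case (Suc m)
    have "bellY (Suc m) x = fact m * (fps_deriv (ES x) $ m)"
      by (simp add: bellY_ES algebra_simps)
    also have "\<dots> = fact m * (\<Sum>i=0..m. fps_deriv (Axf x) $ i * ES x $ (m - i))"
      by (simp add: ES_deriv fps_mult_nth)
    also have "\<dots> = (\<Sum>i=0..m. of_nat (m choose i) * bellR i x * x (Suc m - i))"
    proof -
      have "fact m * (\<Sum>i=0..m. fps_deriv (Axf x) $ i * ES x $ (m - i))
          = fact m * (\<Sum>i=0..m. fps_deriv (Axf x) $ (m - i) * ES x $ i)"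
        by (subst sum.atLeastAtMost_rev[of _ 0 m]) (simp)
      also have "\<dots> = (\<Sum>i=0..m. of_nat (m choose i) * bellR i x * x (Suc m - i))"
        unfolding sum_distrib_left
      proof (rule sum.cong[OF refl])
        fix i assume i: "i \<in> {0..m}"
        have bi: "bellR i x = fact i * ES x $ i" using less[of i] Suc i by (simp add: bellY_ES)
        have sm: "Suc m - i = Suc (m - i)" using i by auto
        have "fps_deriv (Axf x) $ (m - i) = x (Suc m - i) / fact (m - i)"
          using i by (simp add: Axf_def sm del: of_nat_Suc)
        moreover have "real (m choose i) = fact m / (fact i * fact (m - i))"
          using i by (simp add: binomial_fact)
        ultimately show "fact m * (fps_deriv (Axf x) $ (m - i) * ES x $ i)
              = of_nat (m choose i) * bellR i x * x (Suc m - i)"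
          by (simp only: bi) (simp add: field_simps del: fps_deriv_nth)
      qed
      finally show ?thesis .
    qed
    also have "\<dots> = bellR (Suc m) x" by simp
    finally show ?thesis using Suc by simp
  qed
qed

lemma fps_ode_unique:
  fixes F G C :: "real fps"
  assumes "fps_deriv F = C * F" "fps_deriv G = C * G" "F$0 = G$0"
  shows "F = G"
proof -
  define D where "D = F - G"
  have dD: "fps_deriv D = C * D" using assms unfolding D_def by (simp add: algebra_simps)
  have "D $ n = 0" for n
  proof (induction n rule: less_induct)
    case (less n)
    show ?case
    proof (cases n)
      case 0 then show ?thesis using assms(3) by (simp add: D_def)
    next
      case (Suc m)
      have "(fps_deriv D) $ m = (\<Sum>i=0..m. C$i * D$(m-i))" by (simp add: dD fps_mult_nth)
      also have "\<dots> = 0" using less Suc by (intro sum.neutral) auto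
      finally have "of_nat (m+1) * D $ (m+1) = 0" by simp
      then show ?thesis using Suc by simp
    qed
  qed
  then have "D = 0" by (simp add: fps_ext)
  then show ?thesis by (simp add: D_def)
qed

lemma ES_add: "ES (\<lambda>m. u m + v m) = ES u * ES v"
proof (rule fps_ode_unique)
  have A: "Axf (\<lambda>m. u m + v m) = Axf u + Axf v"
    by (simp add: Axf_def fps_eq_iff add_divide_distrib)
  show "fps_deriv (ES (\<lambda>m. u m + v m)) = fps_deriv (Axf u + Axf v) * ES (\<lambda>m. u m + v m)"
    by (simp add: ES_deriv A)
  show "fps_deriv (ES u * ES v) = fps_deriv (Axf u + Axf v) * (ES u * ES v)"
    by (simp add: ES_deriv algebra_simps)
  show "ES (\<lambda>m. u m + v m) $ 0 = (ES u * ES v) $ 0" by (simp add: ES_0)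
qed

lemma bellY_add:
  "bellY n (\<lambda>m. u m + v m) = (\<Sum>j=0..n. of_nat (n choose j) * bellY j u * bellY (n - j) v)"
proof -
  have "bellY n (\<lambda>m. u m + v m) = fact n * (\<Sum>j=0..n. ES u $ j * ES v $ (n - j))"
    by (simp add: bellY_ES ES_add fps_mult_nth)
  also have "\<dots> = (\<Sum>j=0..n. of_nat (n choose j) * bellY j u * bellY (n - j) v)"
    unfolding sum_distrib_left
    by (intro sum.cong refl) (auto simp: bellY_ES binomial_fact field_simps)
  finally show ?thesis .
qed


lemma Re_pos_not_nonpos_Int: "Re (w::complex) > 0 \<Longrightarrow> w \<notin> \<int>\<^sub>\<le>\<^sub>0"
  by (auto elim!: nonpos_Ints_cases)

definition Sset :: "nat \<Rightarrow> complex set" where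
  "Sset n = {z. -1 < Re z \<and> Re z < of_nat n + 1}"

lemma open_Sset: "open (Sset n)"
  unfolding Sset_def by (intro open_Collect_conj open_halfspace_Re_gt open_halfspace_Re_lt)

lemma Sset_props: "z \<in> Sset n \<Longrightarrow> z + 1 \<notin> \<int>\<^sub>\<le>\<^sub>0 \<and> of_nat n - z + 1 \<notin> \<int>\<^sub>\<le>\<^sub>0"
  unfolding Sset_def by (auto intro!: Re_pos_not_nonpos_Int)

definition Gc :: "nat \<Rightarrow> nat \<Rightarrow> complex \<Rightarrow> complex" where
  "Gc a n z = of_real (fact n ^ a) * rGamma (z + 1) ^ (a - 1) * rGamma (of_nat n - z + 1) ^ a"

definition lc :: "nat \<Rightarrow> nat \<Rightarrow> complex \<Rightarrow> complex" where
  "lc a n z = - of_nat (a - 1) * Digamma (z + 1) + of_nat a * Digamma (of_nat n - z + 1)"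

lemma Gc_real: "Gc a n (of_real t) = of_real (Ffun a n t)"
  unfolding Gc_def Ffun_def
  by (simp flip: rGamma_complex_of_real)

lemma Gc_hol: "Gc a n holomorphic_on A"
  unfolding Gc_def by (intro holomorphic_intros)

lemma lc_hol: "lc a n holomorphic_on Sset n"
proof -
  have "lc a n analytic_on Sset n"
    unfolding lc_def using Sset_props by (intro analytic_intros) auto
  then show ?thesis by (rule analytic_imp_holomorphic)
qed

lemma Gc_deriv: assumes "z \<in> Sset n" shows "deriv (Gc a n) z = Gc a n z * lc a n z"
proof -
  from Sset_props[OF assms] have z1: "z + 1 \<notin> \<int>\<^sub>\<le>\<^sub>0" and z2: "of_nat n - z + 1 \<notin> \<int>\<^sub>\<le>\<^sub>0" by auto
  have pw: "\<And>(k::nat) (R::complex). of_nat k * R ^ (k - 1) * R = of_nat k * R ^ k"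
    by (case_tac k) auto
  have r1: "(rGamma has_field_derivative - rGamma (z + 1) * Digamma (z + 1)) (at (z + 1))"
    by (rule has_field_derivative_rGamma_no_nonpos_int[OF z1])
  have r2: "(rGamma has_field_derivative - rGamma (of_nat n - z + 1) * Digamma (of_nat n - z + 1)) (at (of_nat n - z + 1))"
    by (rule has_field_derivative_rGamma_no_nonpos_int[OF z2])
  have i1: "((\<lambda>w. w + 1) has_field_derivative 1) (at z)" by (auto intro!: derivative_eq_intros)
  have i2: "((\<lambda>w. of_nat n - w + 1) has_field_derivative -1) (at z)" by (auto intro!: derivative_eq_intros)
  have d1: "((\<lambda>w. rGamma (w + 1)) has_field_derivative (- rGamma (z + 1) * Digamma (z + 1)) * 1) (at z)"
    using DERIV_chain2[OF r1 i1] .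
  have d2: "((\<lambda>w. rGamma (of_nat n - w + 1)) has_field_derivative (- rGamma (of_nat n - z + 1) * Digamma (of_nat n - z + 1)) * (-1)) (at z)"
    using DERIV_chain2[OF r2 i2] .
  define R1 where "R1 = rGamma (z + 1)"
  define R2 where "R2 = rGamma (of_nat n - z + 1)"
  have e1: "of_nat (a - 1) * ((- R1 * Digamma (z + 1) * 1) * R1 ^ (a - 1 - Suc 0))
      = - of_nat (a - 1) * R1 ^ (a - 1) * Digamma (z + 1)"
  proof -
    have "of_nat (a - 1) * ((- R1 * Digamma (z + 1) * 1) * R1 ^ (a - 1 - Suc 0))
       = - (of_nat (a - 1) * R1 ^ (a - 1 - 1) * R1) * Digamma (z + 1)" by (simp add: algebra_simps)
    also have "\<dots> = - of_nat (a - 1) * R1 ^ (a - 1) * Digamma (z + 1)" by (simp only: pw) simp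
    finally show ?thesis .
  qed
  have e2: "of_nat a * ((- R2 * Digamma (of_nat n - z + 1) * (-1)) * R2 ^ (a - Suc 0))
      = of_nat a * R2 ^ a * Digamma (of_nat n - z + 1)"
  proof -
    have "of_nat a * ((- R2 * Digamma (of_nat n - z + 1) * (-1)) * R2 ^ (a - Suc 0))
       = (of_nat a * R2 ^ (a - 1) * R2) * Digamma (of_nat n - z + 1)" by (simp add: algebra_simps)
    also have "\<dots> = of_nat a * R2 ^ a * Digamma (of_nat n - z + 1)" by (simp only: pw)
    finally show ?thesis .
  qed
  have p1: "((\<lambda>w. rGamma (w + 1) ^ (a - 1)) has_field_derivative
        - of_nat (a - 1) * R1 ^ (a - 1) * Digamma (z + 1)) (at z)"
    using DERIV_cong[OF DERIV_power[OF d1, of "a - 1"] e1[unfolded R1_def]] unfolding R1_def .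
  have p2: "((\<lambda>w. rGamma (of_nat n - w + 1) ^ a) has_field_derivative
        of_nat a * R2 ^ a * Digamma (of_nat n - z + 1)) (at z)"
    using DERIV_cong[OF DERIV_power[OF d2, of "a"] e2[unfolded R2_def]] unfolding R2_def .
  have "(Gc a n has_field_derivative Gc a n z * lc a n z) (at z)"
    unfolding Gc_def lc_def mult.assoc
    apply (rule DERIV_cmult)
    apply (rule DERIV_mult[OF p1 p2, THEN DERIV_cong])
    apply (simp add: R1_def R2_def algebra_simps)
    done
  then show ?thesis by (rule DERIV_imp_deriv)
qed


lemma Gc_higher:
  assumes "z \<in> Sset n"
  shows "(deriv^^\<mu>) (Gc a n) z = Gc a n z * bellR \<mu> (\<lambda>m. (deriv^^(m - 1)) (lc a n) z)"
  using assms
proof (induction \<mu> arbitrary: z rule: less_induct)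
  case (less \<mu>)
  show ?case
  proof (cases \<mu>)
    case 0 then show ?thesis by simp
  next
    case (Suc m)
    define L where "L = (\<lambda>m. (deriv^^(m - 1)) (lc a n) z)"
    have hG: "Gc a n holomorphic_on Sset n" by (rule Gc_hol)
    have "(deriv^^Suc m) (Gc a n) z = (deriv^^m) (deriv (Gc a n)) z"
      by (simp add: funpow_Suc_right del: funpow.simps)
    also have "\<dots> = (deriv^^m) (\<lambda>w. Gc a n w * lc a n w) z"
      by (rule higher_deriv_transform_within_open[OF _ _ open_Sset less.prems])
        (auto intro!: holomorphic_intros holomorphic_deriv hG lc_hol open_Sset Gc_deriv)
    also have "\<dots> = (\<Sum>i=0..m. of_nat (m choose i) * (deriv^^i) (Gc a n) z * (deriv^^(m - i)) (lc a n) z)"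
      by (rule higher_deriv_mult[OF hG lc_hol open_Sset less.prems])
    also have "\<dots> = (\<Sum>i=0..m. Gc a n z * (of_nat (m choose i) * bellR i L * L (Suc m - i)))"
    proof (rule sum.cong[OF refl])
      fix i assume i: "i \<in> {0..m}"
      have "(deriv^^i) (Gc a n) z = Gc a n z * bellR i L"
        using less.IH[of i z] less.prems i Suc unfolding L_def by auto
      moreover have "L (Suc m - i) = (deriv^^(m - i)) (lc a n) z"
        using i unfolding L_def by (simp add: Suc_diff_le)
      ultimately show "of_nat (m choose i) * (deriv^^i) (Gc a n) z * (deriv^^(m - i)) (lc a n) z
          = Gc a n z * (of_nat (m choose i) * bellR i L * L (Suc m - i))" by simp
    qed
    also have "\<dots> = Gc a n z * bellR (Suc m) L" by (simp add: sum_distrib_left)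
    finally show ?thesis using Suc unfolding L_def by simp
  qed
qed

lemma lc_higher:
  assumes "z \<in> Sset n"
  shows "(deriv^^j) (lc a n) z = - of_nat (a - 1) * Polygamma j (z + 1)
           + of_nat a * ((-1)^j * Polygamma j (of_nat n - z + 1))"
proof -
  define T where "T = {w::complex. 0 < Re w}"
  have oT: "open T" unfolding T_def by (rule open_halfspace_Re_gt)
  have hT: "Digamma holomorphic_on T"
    by (rule holomorphic_on_Polygamma) (auto simp: T_def dest: Re_pos_not_nonpos_Int)
  have inT: "\<And>w. w \<in> Sset n \<Longrightarrow> 1 * w + 1 \<in> T" "\<And>w. w \<in> Sset n \<Longrightarrow> (-1) * w + (of_nat n + 1) \<in> T"
    by (auto simp: Sset_def T_def)
  have h1: "(\<lambda>w. Digamma (1 * w + 1)) holomorphic_on Sset n"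
    using inT(1) by (intro holomorphic_on_compose_gen[OF _ hT, unfolded o_def]) (auto intro!: holomorphic_intros)
  have h2: "(\<lambda>w. Digamma ((-1) * w + (of_nat n + 1))) holomorphic_on Sset n"
    using inT(2) by (intro holomorphic_on_compose_gen[OF _ hT, unfolded o_def]) (auto intro!: holomorphic_intros)
  have eq: "lc a n = (\<lambda>w. - of_nat (a - 1) * Digamma (1 * w + 1) + of_nat a * Digamma ((-1) * w + (of_nat n + 1)))"
    by (auto simp: lc_def fun_eq_iff algebra_simps)
  have "(deriv^^j) (lc a n) z = - of_nat (a - 1) * (deriv^^j) (\<lambda>w. Digamma (1 * w + 1)) z
       + of_nat a * (deriv^^j) (\<lambda>w. Digamma ((-1) * w + (of_nat n + 1))) z"
  proof -
    have hc1: "(\<lambda>w. - of_nat (a - 1) * Digamma (1 * w + 1)) holomorphic_on Sset n"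
      by (rule holomorphic_on_mult[OF holomorphic_on_const h1])
    have hc2: "(\<lambda>w. of_nat a * Digamma ((-1) * w + (of_nat n + 1))) holomorphic_on Sset n"
      by (rule holomorphic_on_mult[OF holomorphic_on_const h2])
    show ?thesis
      unfolding eq
      apply (subst higher_deriv_add[OF hc1 hc2 open_Sset assms])
      apply (subst higher_deriv_cmult[OF h1 assms open_Sset])
      apply (subst higher_deriv_cmult[OF h2 assms open_Sset])
      ..
  qed
  also have "(deriv^^j) (\<lambda>w. Digamma (1 * w + 1)) z = 1^j * (deriv^^j) Digamma (1 * z + 1)"
    by (rule higher_deriv_compose_linear'[OF hT open_Sset oT assms inT(1)])
  also have "(deriv^^j) (\<lambda>w. Digamma ((-1) * w + (of_nat n + 1))) z = (-1)^j * (deriv^^j) Digamma ((-1) * z + (of_nat n + 1))"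
    by (rule higher_deriv_compose_linear'[OF hT open_Sset oT assms inT(2)])
  also have "(deriv^^j) Digamma (1 * z + 1) = Polygamma j (z + 1)"
    using higher_deriv_Polygamma[of "z + 1" j 0] Sset_props[OF assms] by simp
  also have "(deriv^^j) Digamma ((-1) * z + (of_nat n + 1)) = Polygamma j (of_nat n - z + 1)"
    using higher_deriv_Polygamma[of "of_nat n - z + 1" j 0] Sset_props[OF assms] by (simp add: algebra_simps)
  finally show ?thesis by simp
qed


lemma harmgen_shift: "harmgen m k = (\<Sum>i<k. 1 / real (Suc i) ^ m)"
  unfolding harmgen_def by (induction k) auto

lemma Polygamma_nat_real:
  "Polygamma j (real (Suc k)) =
     (if j = 0 then harmgen 1 k - euler_mascheroni
      else (-1)^(Suc j) * fact j * (zeta_nat (Suc j) - harmgen (Suc j) k))"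
proof (cases "j = 0")
  case True
  have "harm k = harmgen 1 k" unfolding harm_def harmgen_def by (simp add: inverse_eq_divide)
  then show ?thesis using True Digamma_of_nat[of k, where 'a=real] by simp
next
  case False
  have "Polygamma j (1 + real k) = Polygamma j 1 + (-1)^j * fact j * (\<Sum>i<k. 1 / (1 + real i) ^ Suc j)"
  proof -
    have pre: "\<forall>i<k. (1::real) \<noteq> - of_nat i" by (auto simp del: of_nat_Suc)
    show ?thesis using Polygamma_plus_of_nat[of k "1::real" j] pre by simp
  qed
  moreover have "Polygamma j (1::real) = (-1)^Suc j * fact j * zeta_nat (Suc j)"
    using False unfolding Polygamma_def zeta_nat_def by (simp add: inverse_eq_divide add.commute)
  moreover have "(\<Sum>i<k. 1 / (1 + real i) ^ Suc j) = harmgen (Suc j) k"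
    unfolding harmgen_shift by (simp add: add.commute)
  ultimately show ?thesis using False by (simp add: algebra_simps add.commute)
qed

lemma Polygamma_nat_complex:
  "Polygamma j (of_nat (Suc k) :: complex) = of_real (Polygamma j (real (Suc k)))"
  using Polygamma_of_real[of "real (Suc k)" j, where 'a=complex] by simp

lemma L_value:
  assumes k: "k \<le> n" and m: "m \<ge> 1" and a: "a \<ge> 1"
  shows "(deriv^^(m - 1)) (lc a n) (of_real (real k)) = of_real (rterm a n k m - xconst a m)"
proof -
  have S: "of_real (real k) \<in> Sset n" using k by (simp add: Sset_def)
  have z1: "complex_of_real (real k) + 1 = of_nat (Suc k)" by simp
  have z2: "of_nat n - complex_of_real (real k) + 1 = of_nat (Suc (n - k))" using k by (simp add: of_nat_diff)
  define j where "j = m - 1"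
  have mj: "m = Suc j" using m by (simp add: j_def)
  have ra: "real (a - 1) = real a - 1" using a by simp
  have "(deriv^^(m - 1)) (lc a n) (of_real (real k)) =
      of_real (- real (a - 1) * Polygamma j (real (Suc k)) + real a * ((-1)^j * Polygamma j (real (Suc (n - k)))))"
    unfolding lc_higher[OF S] z1 z2 Polygamma_nat_complex j_def by simp
  also have "- real (a - 1) * Polygamma j (real (Suc k)) + real a * ((-1)^j * Polygamma j (real (Suc (n - k))))
     = rterm a n k m - xconst a m"
    unfolding Polygamma_nat_real rterm_def xconst_def mj ra
    by (cases "j = 0") (auto simp: algebra_simps)
  finally show ?thesis .
qed

lemma Ffun_nat:
  assumes k: "k \<le> n" and a: "a \<ge> 1"
  shows "Ffun a n (real k) = real (n choose k) ^ a * fact k"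
proof -
  have rg: "rGamma (real j + 1) = 1 / fact j" for j
    using Gamma_fact[of j, where 'a=real] by (simp add: rGamma_inverse_Gamma add.commute divide_inverse)
  have nk: "real n - real k + 1 = real (n - k) + 1" using k by (simp add: of_nat_diff)
  have "Ffun a n (real k) = fact n ^ a / (fact k ^ (a - 1) * fact (n - k) ^ a)"
    unfolding Ffun_def nk rg by (simp add: power_divide)
  also have "\<dots> = (fact n / (fact k * fact (n - k))) ^ a * fact k"
  proof -
    have "fact k ^ a = fact k ^ (a - 1) * (fact k :: real)"
      using a by (metis Suc_diff_le diff_Suc_1 power_Suc2)
    then show ?thesis by (simp add: power_divide power_mult_distrib field_simps)
  qed
  also have "\<dots> = real (n choose k) ^ a * fact k" using k by (simp add: binomial_fact)
  finally show ?thesis .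
qed

lemma Ffun_higher:
  assumes k: "k \<le> n" and a: "a \<ge> 1"
  shows "(deriv^^\<mu>) (Ffun a n) (real k) = Ffun a n (real k) * bellY \<mu> (\<lambda>m. rterm a n k m - xconst a m)"
proof -
  have S: "of_real (real k) \<in> Sset n" using k by (simp add: Sset_def)
  have "complex_of_real ((deriv^^\<mu>) (Ffun a n) (real k)) = (deriv^^\<mu>) (Gc a n) (of_real (real k))"
    by (rule higher_deriv_real_transfer[OF Gc_hol Gc_real, symmetric])
  also have "\<dots> = Gc a n (of_real (real k)) * bellR \<mu> (\<lambda>m. (deriv^^(m - 1)) (lc a n) (of_real (real k)))"
    by (rule Gc_higher[OF S])
  also have "bellR \<mu> (\<lambda>m. (deriv^^(m - 1)) (lc a n) (of_real (real k)))
      = bellR \<mu> (\<lambda>m. complex_of_real (rterm a n k m - xconst a m))"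
    by (intro bellR_cong L_value[OF k _ a])
  also have "\<dots> = of_real (bellY \<mu> (\<lambda>m. rterm a n k m - xconst a m))"
    using bellR_of_real[of \<mu> "\<lambda>m. rterm a n k m - xconst a m", where 'a=complex]
    by (simp add: bellY_bellR)
  finally show ?thesis unfolding Gc_real of_real_mult[symmetric] of_real_eq_iff .
qed


lemma bellR_int:
  fixes D :: real
  assumes "\<And>m. 1 \<le> m \<Longrightarrow> m \<le> \<mu> \<Longrightarrow> D ^ m * x m \<in> \<int>"
  shows "D ^ \<mu> * bellR \<mu> x \<in> \<int>"
  using assms
proof (induction \<mu> rule: less_induct)
  case (less \<mu>)
  show ?case
  proof (cases \<mu>)
    case 0 then show ?thesis by simp
  next
    case (Suc m)
    have "D ^ Suc m * bellR (Suc m) x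
        = (\<Sum>i=0..m. of_nat (m choose i) * (D ^ i * bellR i x) * (D ^ (Suc m - i) * x (Suc m - i)))"
      unfolding bellR.simps sum_distrib_left
    proof (rule sum.cong[OF refl])
      fix i assume "i \<in> {0..m}"
      then have "D ^ Suc m = D ^ i * D ^ (Suc m - i)" by (simp add: power_add[symmetric])
      then show "D ^ Suc m * (of_nat (m choose i) * bellR i x * x (Suc m - i)) =
         of_nat (m choose i) * (D ^ i * bellR i x) * (D ^ (Suc m - i) * x (Suc m - i))"
        by (simp add: algebra_simps)
    qed
    also have "\<dots> \<in> \<int>"
    proof (rule Ints_sum)
      fix i assume i: "i \<in> {0..m}"
      have 1: "(of_nat (m choose i) :: real) \<in> \<int>" by simp
      have 2: "D ^ i * bellR i x \<in> \<int>" using less.IH[of i] less.prems i Suc by auto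
      have 3: "D ^ (Suc m - i) * x (Suc m - i) \<in> \<int>" using less.prems i Suc by auto
      show "of_nat (m choose i) * (D ^ i * bellR i x) * (D ^ (Suc m - i) * x (Suc m - i)) \<in> \<int>"
        by (rule Ints_mult[OF Ints_mult[OF 1 2] 3])
    qed
    finally show ?thesis using Suc by simp
  qed
qed

lemma harmgen_int:
  assumes "s \<le> n"
  shows "real (Lcm {1..n}) ^ m * harmgen m s \<in> \<int>"
proof -
  have "real (Lcm {1..n}) ^ m * harmgen m s = (\<Sum>j=1..s. real (Lcm {1..n} div j) ^ m)"
    unfolding harmgen_def sum_distrib_left
  proof (rule sum.cong[OF refl])
    fix j assume j: "j \<in> {1..s}"
    then have "j dvd Lcm {1..n}" using assms by (intro dvd_Lcm) auto
    then have "real (Lcm {1..n} div j) = real (Lcm {1..n}) / real j" by (rule real_of_nat_div)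
    then show "real (Lcm {1..n}) ^ m * (1 / real j ^ m) = real (Lcm {1..n} div j) ^ m"
      by (simp add: power_divide)
  qed
  also have "\<dots> \<in> \<int>" by (intro Ints_sum) simp
  finally show ?thesis .
qed

lemma rterm_int:
  assumes "k \<le> n"
  shows "real (Lcm {1..n}) ^ m * rterm a n k m \<in> \<int>"
proof -
  define D where "D = real (Lcm {1..n})"
  have "D ^ m * rterm a n k m = fact (m - 1) * (real a * (D ^ m * harmgen m (n - k))
        + (-1) ^ m * (real a - 1) * (D ^ m * harmgen m k))"
    unfolding rterm_def by (simp add: algebra_simps)
  also have "\<dots> \<in> \<int>"
  proof -
    have h1: "D ^ m * harmgen m (n - k) \<in> \<int>" using harmgen_int[of "n - k" n m] unfolding D_def by simp
    have h2: "D ^ m * harmgen m k \<in> \<int>" using harmgen_int[of k n m] assms unfolding D_def by simp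
    have f: "(fact (m - 1) :: real) \<in> \<int>" by (metis Ints_of_nat of_nat_fact)
    have ra: "real a \<in> \<int>" by simp
    have ra1: "real a - 1 \<in> \<int>" by simp
    have s: "((-1) ^ m :: real) \<in> \<int>" by simp
    show ?thesis
      by (rule Ints_mult[OF f Ints_add[OF Ints_mult[OF ra h1] Ints_mult[OF Ints_mult[OF s ra1] h2]]])
  qed
  finally show ?thesis unfolding D_def .
qed

theorem lemma1:
  fixes a :: nat
  assumes "a \<ge> 2"
  shows "(\<forall>\<mu>\<in>{1..a-1}. \<exists>lam :: nat \<Rightarrow> real. \<forall>n.
            pseq a n \<mu> - qseq a n * alpha a \<mu> = (\<Sum>\<nu>=1..\<mu>. lam \<nu> * Fsum a n \<nu>))
       \<and> (\<forall>n. Fsum a n 0 = qseq a n)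
       \<and> (\<forall>n. \<forall>\<mu>\<in>{0..a-1}. real (Lcm {1..n}) ^ \<mu> * pseq a n \<mu> \<in> \<int>)"
proof -
  have a1: "a \<ge> 1" using assms by simp
  have F0: "Fsum a n 0 = qseq a n" for n
    unfolding Fsum_def qseq_def by (intro sum.cong refl) (simp add: Ffun_nat[OF _ a1])
  have key: "pseq a n \<mu> = (\<Sum>j=0..\<mu>. of_nat (\<mu> choose j) * alpha a (\<mu> - j) * Fsum a n j)" for n \<mu>
  proof -
    have "pseq a n \<mu> = (\<Sum>k=0..n. \<Sum>j=0..\<mu>. of_nat (\<mu> choose j) * alpha a (\<mu> - j) *
              (deriv^^j) (Ffun a n) (real k))"
      unfolding pseq_def
    proof (rule sum.cong[OF refl])
      fix k assume k: "k \<in> {0..n}"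
      have "bellY \<mu> (rterm a n k) = bellY \<mu> (\<lambda>m. (rterm a n k m - xconst a m) + xconst a m)" by simp
      also have "\<dots> = (\<Sum>j=0..\<mu>. of_nat (\<mu> choose j) * bellY j (\<lambda>m. rterm a n k m - xconst a m) * alpha a (\<mu> - j))"
        unfolding bellY_add alpha_def ..
      finally show "real (n choose k) ^ a * fact k * bellY \<mu> (rterm a n k) =
         (\<Sum>j=0..\<mu>. of_nat (\<mu> choose j) * alpha a (\<mu> - j) * (deriv^^j) (Ffun a n) (real k))"
        using k by (simp add: Ffun_higher[OF _ a1] Ffun_nat[OF _ a1] sum_distrib_left algebra_simps)
    qed
    also have "\<dots> = (\<Sum>j=0..\<mu>. of_nat (\<mu> choose j) * alpha a (\<mu> - j) * Fsum a n j)"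
      unfolding Fsum_def by (subst sum.swap) (simp add: sum_distrib_left)
    finally show ?thesis .
  qed
  have P1: "\<forall>\<mu>\<in>{1..a-1}. \<exists>lam :: nat \<Rightarrow> real. \<forall>n.
            pseq a n \<mu> - qseq a n * alpha a \<mu> = (\<Sum>\<nu>=1..\<mu>. lam \<nu> * Fsum a n \<nu>)"
  proof
    fix \<mu> assume "\<mu> \<in> {1..a-1}"
    show "\<exists>lam :: nat \<Rightarrow> real. \<forall>n.
            pseq a n \<mu> - qseq a n * alpha a \<mu> = (\<Sum>\<nu>=1..\<mu>. lam \<nu> * Fsum a n \<nu>)"
    proof (intro exI allI)
      fix n
      have "pseq a n \<mu> = alpha a \<mu> * Fsum a n 0 +
              (\<Sum>j=Suc 0..\<mu>. of_nat (\<mu> choose j) * alpha a (\<mu> - j) * Fsum a n j)"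
        unfolding key by (simp add: sum.atLeast_Suc_atMost)
      then show "pseq a n \<mu> - qseq a n * alpha a \<mu> =
          (\<Sum>\<nu>=1..\<mu>. (of_nat (\<mu> choose \<nu>) * alpha a (\<mu> - \<nu>)) * Fsum a n \<nu>)"
        by (simp add: F0)
    qed
  qed
  have P3: "\<forall>n. \<forall>\<mu>\<in>{0..a-1}. real (Lcm {1..n}) ^ \<mu> * pseq a n \<mu> \<in> \<int>"
  proof (intro allI ballI)
    fix n \<mu>
    show "real (Lcm {1..n}) ^ \<mu> * pseq a n \<mu> \<in> \<int>"
      unfolding pseq_def sum_distrib_left
    proof (intro Ints_sum)
      fix k assume k: "k \<in> {0..n}"
      have "real (Lcm {1..n}) ^ \<mu> * bellY \<mu> (rterm a n k) \<in> \<int>"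
        unfolding bellY_bellR using k by (intro bellR_int rterm_int) auto
      then have "real (n choose k) ^ a * fact k * (real (Lcm {1..n}) ^ \<mu> * bellY \<mu> (rterm a n k)) \<in> \<int>"
      proof -
        have f: "(fact k :: real) \<in> \<int>" by (metis Ints_of_nat of_nat_fact)
        have c: "real (n choose k) ^ a \<in> \<int>" by simp
        show ?thesis by (rule Ints_mult[OF Ints_mult[OF c f]]) fact
      qed
      then show "real (Lcm {1..n}) ^ \<mu> * (real (n choose k) ^ a * fact k * bellY \<mu> (rterm a n k)) \<in> \<int>"
        by (simp add: algebra_simps)
    qed
  qed
  show ?thesis using P1 F0 P3 by blast
qed

end
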